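(* In the setting and notation of the context, there is $\delta>0$ such that $V$ is analytic in $D(1,\delta)\setminus[1-\delta,1]$, satisfies $W(x)=V_-(x)V_-(x)^\ast=V_+(x)V_+(x)^\ast$ for $x\in(1-\delta,1)$, and \[W(z)=V(z)\,\mathrm{diag}(e^{-\alpha_1\pi i},\dots,e^{-\alpha_r\pi i})\,V(\bar z)^\ast\quad\text{for }z\in D(1,\delta),\ \mathrm{Im}\,z>0,\] \[W(z)=V(z)\,\mathrm{diag}(e^{\alpha_1\pi i},\dots,e^{\alpha_r\pi i})\,V(\bar z)^\ast\quad\text{for }z\in D(1,\delta),\ \mathrm{Im}\,z<0,\] where $W(z)=(1-z)^\alpha(1+z)^\beta H(z)$ (principal branches) is the analytic continuation of $W$.
   Context: Fix $r\ge1$, $\alpha,\beta>-1$ and $H:[-1,1]\to\mathbb C^{r\times r}$ with $H(x)$ Hermitian positive definite for $x\in(-1,1)$, $H$ real analytic on $[-1,1]$ (analytically continued to a complex neighborhood, still denoted $H$), and $H(\pm1)$ not the zero matrix. Put $W(x)=(1-x)^\alpha(1+x)^\beta H(x)$. Fix $H=Q\Lambda Q^\ast$ on $[-1,1]$ with $Q$ unitary, $\Lambda=\mathrm{diag}(\lambda_1,\dots,\lambda_r)$, $Q,\Lambda$ real analytic (continued analytically to a convex neighborhood $N$ of $[-1,1]$ where no $\lambda_j$ vanishes except possibly at $\pm1$). $n_j$ is the order of vanishing of $\lambda_j$ at $1$ (zero if $\lambda_j(1)>0$), $\alpha_j=\alpha+n_j$. With $\widetilde\lambda_j=(-1)^{n_j}\lambda_j$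 and $\widetilde\lambda_j^{1/2}$ the continuation to $N\setminus(-\infty,1]$ of the positive square root on $(1,1+\delta)$, $V(z)=(z-1)^{\alpha/2}(z+1)^{\beta/2}Q(z)\mathrm{diag}(\widetilde\lambda_1(z)^{1/2},\dots,\widetilde\lambda_r(z)^{1/2})$ (principal branches). $V_\pm(x)=\lim_{\varepsilon\to0+}V(x\pm i\varepsilon)$; $D(1,\delta)$ is the open disk of radius $\delta$ about $1$. *)

theory Defs
  imports "HOL-Complex_Analysis.Complex_Analysis"
begin

text \<open>r x r complex matrices are modelled as complex^'r^'r with 'r a finite index type.\<close>

definition adjoint_mat :: "complex^'r^'r \<Rightarrow> complex^'r^'r" where
  "adjoint_mat A = (\<chi> i j. cnj (A $ j $ i))"

definition diag_mat :: "('r::finite \<Rightarrow> complex) \<Rightarrow> complex^'r^'r" where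
  "diag_mat d = (\<chi> i j. if i = j then d i else 0)"

definition smat :: "complex \<Rightarrow> complex^'r^'r \<Rightarrow> complex^'r^'r" where
  "smat c A = (\<chi> i j. c * A $ i $ j)"

definition unitary_mat :: "complex^'r^'r \<Rightarrow> bool" where
  "unitary_mat U \<longleftrightarrow> adjoint_mat U ** U = mat 1"

definition herm_pos_def :: "complex^'r^'r \<Rightarrow> bool" where
  "herm_pos_def A \<longleftrightarrow> adjoint_mat A = A \<and>
     (\<forall>v::complex^'r. v \<noteq> 0 \<longrightarrow>
        (let q = (\<Sum>i\<in>UNIV. \<Sum>j\<in>UNIV. cnj (v $ i) * A $ i $ j * v $ j) in Im q = 0 \<and> Re q > 0))"

definition mat_analytic_on :: "(complex \<Rightarrow> complex^'r^'r) \<Rightarrow> complex set \<Rightarrow> bool" where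
  "mat_analytic_on f S \<longleftrightarrow> (\<forall>i j. (\<lambda>z. f z $ i $ j) analytic_on S)"

definition Wfun :: "real \<Rightarrow> real \<Rightarrow> (complex \<Rightarrow> complex^'r^'r) \<Rightarrow> complex \<Rightarrow> complex^'r^'r" where
  "Wfun \<alpha> \<beta> H z = smat ((1 - z) powr (complex_of_real \<alpha>) * (1 + z) powr (complex_of_real \<beta>)) (H z)"

definition Vfun :: "real \<Rightarrow> real \<Rightarrow> (complex \<Rightarrow> complex^'r^'r) \<Rightarrow> ('r \<Rightarrow> complex \<Rightarrow> complex)
     \<Rightarrow> complex \<Rightarrow> complex^'r^'r" where
  "Vfun \<alpha> \<beta> Q sq z = smat ((z - 1) powr (complex_of_real (\<alpha>/2)) * (z + 1) powr (complex_of_real (\<beta>/2)))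
                         (Q z ** diag_mat (\<lambda>j. sq j z))"

definition slit1 :: "complex set" where
  "slit1 = {complex_of_real x | x. x \<le> 1}"

text \<open>Order of vanishing of an analytic function at 1 (0 if it does not vanish there).\<close>
definition vanish_order1 :: "(complex \<Rightarrow> complex) \<Rightarrow> nat" where
  "vanish_order1 f = nat (zorder f 1)"

end

theory Submission
  imports Defs
begin


lemma smat_entry: "smat c A $ i $ j = c * A $ i $ j"
  by (simp add: smat_def)

lemma mdiag_entry: "(A ** diag_mat d) $ i $ j = A $ i $ j * d j"
  by (simp add: matrix_matrix_mult_def diag_mat_def if_distrib sum.delta' cong: if_cong)

lemma madj_entry: "(A ** adjoint_mat B) $ i $ j = (\<Sum>k\<in>UNIV. A $ i $ k * cnj (B $ j $ k))"
  by (simp add: matrix_matrix_mult_def adjoint_mat_def)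

lemma triple_entry: "(A ** diag_mat d ** adjoint_mat B) $ i $ j = (\<Sum>k\<in>UNIV. A $ i $ k * d k * cnj (B $ j $ k))"
  by (simp add: madj_entry mdiag_entry)

lemma Vfun_entry: "Vfun \<alpha> \<beta> Q sq z $ i $ k =
   (z - 1) powr (complex_of_real (\<alpha>/2)) * (z + 1) powr (complex_of_real (\<beta>/2)) * (Q z $ i $ k * sq k z)"
  by (simp add: Vfun_def smat_entry mdiag_entry)

lemma Wfun_entry: "Wfun \<alpha> \<beta> H z $ i $ j =
   (1 - z) powr (complex_of_real \<alpha>) * (1 + z) powr (complex_of_real \<beta>) * H z $ i $ j"
  by (simp add: Wfun_def smat_entry)

lemma unitary_entry: "unitary_mat U \<Longrightarrow> (\<Sum>i\<in>UNIV. cnj (U $ i $ k) * U $ i $ m) = (if k = m then 1 else 0)"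
  unfolding unitary_mat_def
  by (drule arg_cong[where f="\<lambda>A. A $ k $ m"]) (simp add: matrix_matrix_mult_def adjoint_mat_def mat_def)

lemma exp_nat_pi: "exp (complex_of_nat n * pi * \<i>) = (-1) ^ n"
proof -
  have "exp (complex_of_nat n * (pi * \<i>)) = exp (pi * \<i>) ^ n" by (rule exp_of_nat_mult)
  then show ?thesis by (simp add: mult.assoc)
qed

lemma islimpt_real_ivl: "a < b \<Longrightarrow> complex_of_real a islimpt (complex_of_real ` {a<..<b})"
  unfolding islimpt_approachable
proof (intro allI impI)
  fix e :: real assume "a < b" "0 < e"
  define t where "t = a + min (e/2) ((b-a)/2)"
  have "t \<in> {a<..<b}" "t \<noteq> a" "dist t a < e" using \<open>a<b\<close> \<open>0<e\<close> by (auto simp: t_def dist_real_def min_def field_simps)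
  then show "\<exists>x'\<in>complex_of_real ` {a<..<b}. x' \<noteq> complex_of_real a \<and> dist x' (complex_of_real a) < e"
    by (intro bexI[of _ "complex_of_real t"]) (auto simp: dist_of_real)
qed

lemma branch_limit:
  fixes \<phi> L :: "real \<Rightarrow> complex"
  assumes r: "0 < r" and cont\<phi>: "continuous_on {0<..<r} \<phi>" and contL: "continuous_on {0<..<r} L"
    and sqr: "\<And>\<epsilon>. 0 < \<epsilon> \<Longrightarrow> \<epsilon> < r \<Longrightarrow> (\<phi> \<epsilon>)\<^sup>2 = L \<epsilon>"
    and lim: "(L \<longlongrightarrow> L0) (at_right 0)" and nz: "L0 \<noteq> 0"
  shows "\<exists>l. (\<phi> \<longlongrightarrow> l) (at_right 0) \<and> l\<^sup>2 = L0"
proof -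
  have "((\<lambda>\<epsilon>. L \<epsilon> / L0) \<longlongrightarrow> L0 / L0) (at_right 0)" using lim nz by (intro tendsto_intros) auto
  then have lim1: "((\<lambda>\<epsilon>. L \<epsilon> / L0) \<longlongrightarrow> 1) (at_right 0)" using nz by simp
  then have "eventually (\<lambda>\<epsilon>. dist (L \<epsilon> / L0) 1 < 1) (at_right 0)" using tendstoD zero_less_one by blast
  then obtain r1 where r1: "r1 > 0" "\<And>\<epsilon>. 0 < \<epsilon> \<Longrightarrow> \<epsilon> < r1 \<Longrightarrow> dist (L \<epsilon> / L0) 1 < 1"
    unfolding eventually_at_right_field by auto
  define r2 where "r2 = min r r1"
  have r2: "r2 > 0" "r2 \<le> r" using r r1 by (auto simp: r2_def)
  define s0 where "s0 = csqrt L0"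
  define g where "g \<epsilon> = s0 * csqrt (L \<epsilon> / L0)" for \<epsilon>
  have notneg: "L \<epsilon> / L0 \<notin> \<real>\<^sub>\<le>\<^sub>0" "L \<epsilon> \<noteq> 0" if "0 < \<epsilon>" "\<epsilon> < r2" for \<epsilon>
  proof -
    have d: "dist (L \<epsilon> / L0) 1 < 1" using r1 that by (auto simp: r2_def)
    have "\<bar>Re (L \<epsilon> / L0) - 1\<bar> \<le> cmod (L \<epsilon> / L0 - 1)"
      by (metis abs_Re_le_cmod minus_complex.simps(1) one_complex.simps(1))
    then have "Re (L \<epsilon> / L0) > 0" using d by (simp add: dist_norm)
    then show "L \<epsilon> / L0 \<notin> \<real>\<^sub>\<le>\<^sub>0" "L \<epsilon> \<noteq> 0" by (auto simp: complex_nonpos_Reals_iff)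
  qed
  have contL2: "continuous_on {0<..<r2} L" using contL by (rule continuous_on_subset) (use r2 in auto)
  have "continuous_on {0<..<r2} (\<lambda>\<epsilon>. csqrt (L \<epsilon> / L0))"
    by (rule continuous_on_compose2[OF continuous_on_csqrt, of _ "\<lambda>\<epsilon>. L \<epsilon> / L0"])
       (use notneg in \<open>auto intro!: continuous_intros contL2\<close>)
  then have contg: "continuous_on {0<..<r2} g" unfolding g_def by (intro continuous_intros)
  have gsq: "(g \<epsilon>)\<^sup>2 = L \<epsilon>" for \<epsilon>
    using nz by (simp add: g_def s0_def power_mult_distrib)
  have gnz: "g \<epsilon> \<noteq> 0" if "0 < \<epsilon>" "\<epsilon> < r2" for \<epsilon>
    using gsq[of \<epsilon>] notneg(2)[OF that] by auto
  define q where "q \<epsilon> = \<phi> \<epsilon> / g \<epsilon>" for \<epsilon>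
  have contq: "continuous_on {0<..<r2} q" unfolding q_def
    by (intro continuous_intros contg continuous_on_subset[OF cont\<phi>]) (use r2 gnz in auto)
  have qv: "q \<epsilon> \<in> {1, -1}" if "0 < \<epsilon>" "\<epsilon> < r2" for \<epsilon>
  proof -
    have "(q \<epsilon>)\<^sup>2 = 1" using sqr[of \<epsilon>] gsq[of \<epsilon>] gnz[OF that] notneg(2)[OF that] that r2
      by (simp add: q_def power_divide)
    then show ?thesis by (simp add: power2_eq_1_iff)
  qed
  have "q constant_on {0<..<r2}"
    by (rule continuous_finite_range_constant[OF connected_Ioo contq])
       (rule finite_subset[of _ "{1,-1}"], use qv in fastforce, simp)
  then obtain q0 where q0: "\<And>\<epsilon>. 0 < \<epsilon> \<Longrightarrow> \<epsilon> < r2 \<Longrightarrow> q \<epsilon> = q0"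
    unfolding constant_on_def by auto
  have q0v: "q0 \<in> {1,-1}" using qv[of "r2/2"] q0[of "r2/2"] r2 by auto
  have ev: "eventually (\<lambda>\<epsilon>. q0 * g \<epsilon> = \<phi> \<epsilon>) (at_right 0)"
    unfolding eventually_at_right_field
    by (rule exI[of _ r2]) (use r2 q0 gnz in \<open>force simp: q_def field_simps\<close>)
  have "((\<lambda>\<epsilon>. csqrt (L \<epsilon> / L0)) \<longlongrightarrow> csqrt 1) (at_right 0)"
    by (rule isCont_tendsto_compose[OF _ lim1]) (simp add: continuous_at_csqrt complex_nonpos_Reals_iff)
  then have "((\<lambda>\<epsilon>. (q0 * s0) * csqrt (L \<epsilon> / L0)) \<longlongrightarrow> (q0 * s0) * csqrt 1) (at_right 0)"
    by (rule tendsto_mult[OF tendsto_const])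
  then have "((\<lambda>\<epsilon>. q0 * g \<epsilon>) \<longlongrightarrow> q0 * s0) (at_right 0)"
    by (simp add: g_def mult.assoc)
  then have "(\<phi> \<longlongrightarrow> q0 * s0) (at_right 0)" using ev by (rule Lim_transform_eventually)
  moreover have "(q0 * s0)\<^sup>2 = L0" using q0v by (auto simp: s0_def power_mult_distrib)
  ultimately show ?thesis by blast
qed

lemma powr_upper: assumes "Im z > 0"
  shows "(z - 1) powr (complex_of_real a) = exp (complex_of_real a * pi * \<i>) * (1 - z) powr (complex_of_real a)"
proof -
  have nz: "1 - z \<noteq> 0" "z - 1 \<noteq> 0" using assms by auto
  have "Ln (z - 1) = Ln (-(1 - z))" by simp
  also have "\<dots> = Ln (1 - z) + \<i> * pi" using assms nz by (subst Ln_minus) auto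
  finally have "Ln (z - 1) = Ln (1 - z) + \<i> * pi" .
  then show ?thesis using nz by (simp add: powr_def exp_add[symmetric] algebra_simps)
qed

lemma powr_lower: assumes "Im z < 0"
  shows "(z - 1) powr (complex_of_real a) = exp (- (complex_of_real a * pi * \<i>)) * (1 - z) powr (complex_of_real a)"
proof -
  have nz: "1 - z \<noteq> 0" "z - 1 \<noteq> 0" using assms by auto
  have "Ln (z - 1) = Ln (-(1 - z))" by simp
  also have "\<dots> = Ln (1 - z) - \<i> * pi" using assms nz by (subst Ln_minus) auto
  finally have e: "Ln (z - 1) = Ln (1 - z) - \<i> * pi" .
  have "(z - 1) powr (complex_of_real a) = exp (complex_of_real a * Ln (1 - z) - complex_of_real a * pi * \<i>)"
    using nz by (simp add: powr_def e algebra_simps)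
  also have "\<dots> = exp (- (complex_of_real a * pi * \<i>)) * (1 - z) powr (complex_of_real a)"
    using nz by (simp add: powr_def exp_diff exp_minus field_simps)
  finally show ?thesis .
qed

lemma cnj_powr_real: "Im w \<noteq> 0 \<or> Re w \<ge> 0 \<Longrightarrow> cnj (w powr complex_of_real a) = cnj w powr complex_of_real a"
  by (subst cnj_powr) auto

lemma triple_aux: "(\<Sum>i\<in>A. \<Sum>j\<in>B. (c::complex) * (f i * g j)) = c * (\<Sum>i\<in>A. f i) * (\<Sum>j\<in>B. g j)"
proof -
  have "c * (\<Sum>i\<in>A. f i) * (\<Sum>j\<in>B. g j) = c * ((\<Sum>i\<in>A. f i) * (\<Sum>j\<in>B. g j))" by (simp only: mult.assoc)
  also have "\<dots> = c * (\<Sum>i\<in>A. \<Sum>j\<in>B. f i * g j)" by (simp only: sum_product)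
  also have "\<dots> = (\<Sum>i\<in>A. \<Sum>j\<in>B. c * (f i * g j))" by (simp only: sum_distrib_left)
  finally show ?thesis by simp
qed

lemma lam_pos:
  assumes U: "unitary_mat U" and hp: "herm_pos_def (U ** diag_mat l ** adjoint_mat U)"
  shows "Re (l k) > 0"
proof -
  define v :: "complex^'a" where "v = (\<chi> i. U $ i $ k)"
  have vnz: "v \<noteq> 0"
  proof
    assume "v = 0"
    then have "(\<Sum>i\<in>UNIV. cnj (U $ i $ k) * U $ i $ k) = 0"
      by (simp add: v_def vec_eq_iff)
    with unitary_entry[OF U, of k k] show False by simp
  qed
  define q where "q = (\<Sum>i\<in>UNIV. \<Sum>j\<in>UNIV. cnj (v $ i) * (U ** diag_mat l ** adjoint_mat U) $ i $ j * v $ j)"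
  have "q = (\<Sum>i\<in>UNIV. \<Sum>j\<in>UNIV. \<Sum>m\<in>UNIV. l m * (cnj (U $ i $ k) * U $ i $ m) * (cnj (U $ j $ m) * U $ j $ k))"
    by (simp add: q_def v_def triple_entry sum_distrib_left sum_distrib_right mult_ac)
  also have "\<dots> = (\<Sum>i\<in>UNIV. \<Sum>m\<in>UNIV. \<Sum>j\<in>UNIV. l m * (cnj (U $ i $ k) * U $ i $ m) * (cnj (U $ j $ m) * U $ j $ k))"
    by (intro sum.cong refl sum.swap)
  also have "\<dots> = (\<Sum>m\<in>UNIV. \<Sum>i\<in>UNIV. \<Sum>j\<in>UNIV. l m * (cnj (U $ i $ k) * U $ i $ m) * (cnj (U $ j $ m) * U $ j $ k))"
    by (rule sum.swap)
  also have "\<dots> = (\<Sum>m\<in>UNIV. l m * (\<Sum>i\<in>UNIV. cnj (U $ i $ k) * U $ i $ m) * (\<Sum>j\<in>UNIV. cnj (U $ j $ m) * U $ j $ k))"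
    by (intro sum.cong refl) (simp only: mult.assoc[of "l _"] triple_aux)
  also have "\<dots> = l k"
    by (simp add: unitary_entry[OF U] if_distrib cong: if_cong)
  finally have "q = l k" .
  have "let q' = (\<Sum>i\<in>UNIV. \<Sum>j\<in>UNIV. cnj (v $ i) * (U ** diag_mat l ** adjoint_mat U) $ i $ j * v $ j) in Im q' = 0 \<and> Re q' > 0"
    using hp vnz unfolding herm_pos_def_def by blast
  then have "Re q > 0" unfolding Let_def q_def by blast
  with \<open>q = l k\<close> show ?thesis by simp
qed



lemma slit1_eq: "slit1 = {z. Im z = 0 \<and> Re z \<le> 1}"
  unfolding slit1_def by (auto simp: complex_eq_iff intro: exI[of _ "Re z" for z])

lemma open_ball_slit: "open (ball 1 \<rho> - slit1)"
proof -
  have "closed slit1" unfolding slit1_eq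
    by (intro closed_Collect_conj closed_Collect_eq closed_Collect_le continuous_intros)
  then show ?thesis by (intro open_Diff) auto
qed

lemma connected_ball_slit:
  assumes "0 < \<rho>" shows "connected (ball 1 \<rho> - slit1)"
proof (rule starlike_imp_connected, unfold starlike_def, intro bexI ballI)
  define a where "a = complex_of_real (1 + \<rho>/2)"
  show "a \<in> ball 1 \<rho> - slit1" using assms by (auto simp: a_def slit1_eq dist_norm)
  fix x assume x: "x \<in> ball 1 \<rho> - slit1"
  show "closed_segment a x \<subseteq> ball 1 \<rho> - slit1"
  proof
    fix w assume w: "w \<in> closed_segment a x"
    have "w \<in> ball 1 \<rho>"
      using convex_contains_segment[of "ball 1 \<rho>"] \<open>a \<in> ball 1 \<rho> - slit1\<close> x w by (meson DiffD1 convex_ball subsetD)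
    moreover have "w \<notin> slit1"
    proof
      assume ws: "w \<in> slit1"
      obtain u where u: "0 \<le> u" "u \<le> 1" "w = (1 - u) *\<^sub>R a + u *\<^sub>R x"
        using w unfolding closed_segment_def by auto
      have Imw: "Im w = u * Im x" and Rew: "Re w = (1 - u) * (1 + \<rho>/2) + u * Re x"
        using u by (auto simp: a_def)
      show False
      proof (cases "u = 0")
        case True then show ?thesis using Rew ws assms by (auto simp: slit1_eq)
      next
        case False
        then have "Im x = 0" using Imw ws by (auto simp: slit1_eq)
        then have "Re x > 1" using x by (auto simp: slit1_eq)
        have "(1 - u) * (1 + \<rho>/2) \<ge> (1 - u) * 1" using u assms by (intro mult_left_mono) auto
        moreover have "u * Re x > u * 1" using \<open>Re x > 1\<close> u False by (intro mult_strict_left_mono) auto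
        ultimately have "Re w > 1" using Rew by (smt (verit))
        then show False using ws by (auto simp: slit1_eq)
      qed
    qed
    ultimately show "w \<in> ball 1 \<rho> - slit1" by blast
  qed
qed

lemma exp_nat_pi_minus: "(-1) ^ n * exp (- (complex_of_nat n * pi * \<i>)) = 1"
  by (simp add: exp_minus exp_nat_pi)

lemma exp_nat_pi_plus: "(-1) ^ n * exp (complex_of_nat n * pi * \<i>) = 1"
  by (simp add: exp_nat_pi flip: power_mult_distrib)



lemma offaxis_entry:
  fixes H Q :: "complex \<Rightarrow> complex^'r::finite^'r" and lam sq :: "'r \<Rightarrow> complex \<Rightarrow> complex"
    and D :: "'r \<Rightarrow> complex" and \<alpha> \<beta> :: real and z :: complex
  assumes Hz: "\<And>i j. H z $ i $ j = (\<Sum>k\<in>UNIV. Q z $ i $ k * lam k z * cnj (Q (cnj z) $ j $ k))"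
    and key: "\<And>k. (z - 1) powr complex_of_real (\<alpha>/2) * (z + 1) powr complex_of_real (\<beta>/2) * sq k z * D k
        * cnj ((cnj z - 1) powr complex_of_real (\<alpha>/2) * (cnj z + 1) powr complex_of_real (\<beta>/2) * sq k (cnj z))
        = (1 - z) powr complex_of_real \<alpha> * (1 + z) powr complex_of_real \<beta> * lam k z"
  shows "Wfun \<alpha> \<beta> H z = Vfun \<alpha> \<beta> Q sq z ** diag_mat D ** adjoint_mat (Vfun \<alpha> \<beta> Q sq (cnj z))"
proof -
  have "Wfun \<alpha> \<beta> H z $ i $ j = (Vfun \<alpha> \<beta> Q sq z ** diag_mat D ** adjoint_mat (Vfun \<alpha> \<beta> Q sq (cnj z))) $ i $ j" for i j
    unfolding Wfun_entry triple_entry Vfun_entry Hz sum_distrib_left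
  proof (rule sum.cong[OF refl])
    fix k
    let ?K = "(z - 1) powr complex_of_real (\<alpha>/2) * (z + 1) powr complex_of_real (\<beta>/2) * sq k z * D k
        * cnj ((cnj z - 1) powr complex_of_real (\<alpha>/2) * (cnj z + 1) powr complex_of_real (\<beta>/2) * sq k (cnj z))"
    have "(z - 1) powr complex_of_real (\<alpha>/2) * (z + 1) powr complex_of_real (\<beta>/2) * (Q z $ i $ k * sq k z) * D k *
      cnj ((cnj z - 1) powr complex_of_real (\<alpha>/2) * (cnj z + 1) powr complex_of_real (\<beta>/2) * (Q (cnj z) $ j $ k * sq k (cnj z)))
      = (Q z $ i $ k * cnj (Q (cnj z) $ j $ k)) * ?K"
      by (simp add: mult_ac)
    also have "\<dots> = (1 - z) powr complex_of_real \<alpha> * (1 + z) powr complex_of_real \<beta> * (Q z $ i $ k * lam k z * cnj (Q (cnj z) $ j $ k))"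
      by (simp only: key) (simp add: mult_ac)
    finally show "(1 - z) powr complex_of_real \<alpha> * (1 + z) powr complex_of_real \<beta> * (Q z $ i $ k * lam k z * cnj (Q (cnj z) $ j $ k)) =
      (z - 1) powr complex_of_real (\<alpha>/2) * (z + 1) powr complex_of_real (\<beta>/2) * (Q z $ i $ k * sq k z) * D k *
      cnj ((cnj z - 1) powr complex_of_real (\<alpha>/2) * (cnj z + 1) powr complex_of_real (\<beta>/2) * (Q (cnj z) $ j $ k * sq k (cnj z)))"
      by (rule sym)
  qed
  then show ?thesis by (simp add: vec_eq_iff)
qed

lemma half_sq: "(w::complex) powr complex_of_real (a/2) * w powr complex_of_real (a/2) = w powr complex_of_real a"
proof -
  have "w powr complex_of_real (a/2) * w powr complex_of_real (a/2) = w powr (complex_of_real (a/2) + complex_of_real (a/2))"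
    by (rule powr_add[symmetric])
  also have "complex_of_real (a/2) + complex_of_real (a/2) = complex_of_real a" by (simp flip: of_real_add)
  finally show ?thesis .
qed

lemma key_common:
  fixes sq :: "complex \<Rightarrow> complex" and \<alpha> \<beta> :: real
  assumes "Im z \<noteq> 0" and rf: "cnj (sq (cnj z)) = sq z"
  shows "(z - 1) powr complex_of_real (\<alpha>/2) * (z + 1) powr complex_of_real (\<beta>/2) * sq z * D
        * cnj ((cnj z - 1) powr complex_of_real (\<alpha>/2) * (cnj z + 1) powr complex_of_real (\<beta>/2) * sq (cnj z))
        = (z - 1) powr complex_of_real \<alpha> * (1 + z) powr complex_of_real \<beta> * (sq z)\<^sup>2 * D"
proof -
  have c1: "cnj ((cnj z - 1) powr complex_of_real (\<alpha>/2)) = (z - 1) powr complex_of_real (\<alpha>/2)"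
    by (subst cnj_powr_real) (use assms in auto)
  have c2: "cnj ((cnj z + 1) powr complex_of_real (\<beta>/2)) = (z + 1) powr complex_of_real (\<beta>/2)"
    by (subst cnj_powr_real) (use assms in auto)
  have "(z - 1) powr complex_of_real (\<alpha>/2) * (z + 1) powr complex_of_real (\<beta>/2) * sq z * D
        * cnj ((cnj z - 1) powr complex_of_real (\<alpha>/2) * (cnj z + 1) powr complex_of_real (\<beta>/2) * sq (cnj z))
     = ((z - 1) powr complex_of_real (\<alpha>/2) * (z - 1) powr complex_of_real (\<alpha>/2))
       * ((z + 1) powr complex_of_real (\<beta>/2) * (z + 1) powr complex_of_real (\<beta>/2)) * (sq z * sq z) * D"
    by (simp only: complex_cnj_mult c1 c2 rf mult_ac)
  also have "\<dots> = (z - 1) powr complex_of_real \<alpha> * (1 + z) powr complex_of_real \<beta> * (sq z)\<^sup>2 * D"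
    by (simp only: half_sq power2_eq_square add.commute[of z 1])
  finally show ?thesis .
qed

lemma key_upper:
  fixes sq :: "complex \<Rightarrow> complex" and \<alpha> \<beta> :: real
  assumes "Im z > 0" and rf: "cnj (sq (cnj z)) = sq z" and sqsq: "(sq z)\<^sup>2 = (-1) ^ n * l"
  shows "(z - 1) powr complex_of_real (\<alpha>/2) * (z + 1) powr complex_of_real (\<beta>/2) * sq z
        * exp (- complex_of_real (\<alpha> + real n) * complex_of_real pi * \<i>)
        * cnj ((cnj z - 1) powr complex_of_real (\<alpha>/2) * (cnj z + 1) powr complex_of_real (\<beta>/2) * sq (cnj z))
        = (1 - z) powr complex_of_real \<alpha> * (1 + z) powr complex_of_real \<beta> * l"
    (is "?L = ?R" is "_ * ?E * _ = _")
proof -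
  have E: "exp (- complex_of_real (\<alpha> + real n) * complex_of_real pi * \<i>)
      = exp (- (complex_of_real \<alpha> * pi * \<i>)) * exp (- (complex_of_nat n * pi * \<i>))"
    by (simp add: exp_add[symmetric] algebra_simps)
  have e1: "exp (complex_of_real \<alpha> * pi * \<i>) * exp (- (complex_of_real \<alpha> * pi * \<i>)) = 1"
    by (simp add: exp_minus)
  have "(z - 1) powr complex_of_real \<alpha> * (1 + z) powr complex_of_real \<beta> * (sq z)\<^sup>2
        * exp (- complex_of_real (\<alpha> + real n) * complex_of_real pi * \<i>)
      = (exp (complex_of_real \<alpha> * pi * \<i>) * (1 - z) powr complex_of_real \<alpha>) * (1 + z) powr complex_of_real \<beta> * ((-1) ^ n * l)
        * (exp (- (complex_of_real \<alpha> * pi * \<i>)) * exp (- (complex_of_nat n * pi * \<i>)))"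
    by (simp only: powr_upper[OF assms(1)] sqsq E)
  also have "\<dots> = (1 - z) powr complex_of_real \<alpha> * (1 + z) powr complex_of_real \<beta> * l
       * (exp (complex_of_real \<alpha> * pi * \<i>) * exp (- (complex_of_real \<alpha> * pi * \<i>)))
       * ((-1) ^ n * exp (- (complex_of_nat n * pi * \<i>)))"
    by (simp only: mult_ac)
  also have "\<dots> = (1 - z) powr complex_of_real \<alpha> * (1 + z) powr complex_of_real \<beta> * l"
    by (simp only: e1 exp_nat_pi_minus mult_1_right)
  finally have X: "(z - 1) powr complex_of_real \<alpha> * (1 + z) powr complex_of_real \<beta> * (sq z)\<^sup>2 * ?E = ?R" .
  have K: "?L = (z - 1) powr complex_of_real \<alpha> * (1 + z) powr complex_of_real \<beta> * (sq z)\<^sup>2 * ?E"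
    by (rule key_common[OF _ rf]) (use assms(1) in auto)
  show ?thesis using K X by (rule trans)
qed

lemma key_lower:
  fixes sq :: "complex \<Rightarrow> complex" and \<alpha> \<beta> :: real
  assumes "Im z < 0" and rf: "cnj (sq (cnj z)) = sq z" and sqsq: "(sq z)\<^sup>2 = (-1) ^ n * l"
  shows "(z - 1) powr complex_of_real (\<alpha>/2) * (z + 1) powr complex_of_real (\<beta>/2) * sq z
        * exp (complex_of_real (\<alpha> + real n) * complex_of_real pi * \<i>)
        * cnj ((cnj z - 1) powr complex_of_real (\<alpha>/2) * (cnj z + 1) powr complex_of_real (\<beta>/2) * sq (cnj z))
        = (1 - z) powr complex_of_real \<alpha> * (1 + z) powr complex_of_real \<beta> * l"
    (is "?L = ?R" is "_ * ?E * _ = _")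
proof -
  have E: "exp (complex_of_real (\<alpha> + real n) * complex_of_real pi * \<i>)
      = exp (complex_of_real \<alpha> * pi * \<i>) * exp (complex_of_nat n * pi * \<i>)"
    by (simp add: exp_add[symmetric] algebra_simps)
  have e1: "exp (- (complex_of_real \<alpha> * pi * \<i>)) * exp (complex_of_real \<alpha> * pi * \<i>) = 1"
    by (simp add: exp_minus)
  have "(z - 1) powr complex_of_real \<alpha> * (1 + z) powr complex_of_real \<beta> * (sq z)\<^sup>2
        * exp (complex_of_real (\<alpha> + real n) * complex_of_real pi * \<i>)
      = (exp (- (complex_of_real \<alpha> * pi * \<i>)) * (1 - z) powr complex_of_real \<alpha>) * (1 + z) powr complex_of_real \<beta> * ((-1) ^ n * l)
        * (exp (complex_of_real \<alpha> * pi * \<i>) * exp (complex_of_nat n * pi * \<i>))"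
    by (simp only: powr_lower[OF assms(1)] sqsq E)
  also have "\<dots> = (1 - z) powr complex_of_real \<alpha> * (1 + z) powr complex_of_real \<beta> * l
       * (exp (- (complex_of_real \<alpha> * pi * \<i>)) * exp (complex_of_real \<alpha> * pi * \<i>))
       * ((-1) ^ n * exp (complex_of_nat n * pi * \<i>))"
    by (simp only: mult_ac)
  also have "\<dots> = (1 - z) powr complex_of_real \<alpha> * (1 + z) powr complex_of_real \<beta> * l"
    by (simp only: e1 exp_nat_pi_plus mult_1_right)
  finally have X: "(z - 1) powr complex_of_real \<alpha> * (1 + z) powr complex_of_real \<beta> * (sq z)\<^sup>2 * ?E = ?R" .
  have K: "?L = (z - 1) powr complex_of_real \<alpha> * (1 + z) powr complex_of_real \<beta> * (sq z)\<^sup>2 * ?E"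
    by (rule key_common[OF _ rf]) (use assms(1) in auto)
  show ?thesis using K X by (rule trans)
qed



lemma jump_side:
  fixes H Q :: "complex \<Rightarrow> complex^'r::finite^'r" and lam sq :: "'r \<Rightarrow> complex \<Rightarrow> complex"
    and \<alpha> \<beta> x \<sigma> r :: real and n :: "'r \<Rightarrow> nat" and A :: "complex set"
  assumes \<sigma>: "\<sigma> = 1 \<or> \<sigma> = -1" and r: "0 < r" and x: "-1 < x" "x < 1"
    and inset: "\<And>\<epsilon>. 0 < \<epsilon> \<Longrightarrow> \<epsilon> < r \<Longrightarrow> complex_of_real x + complex_of_real \<sigma> * \<i> * complex_of_real \<epsilon> \<in> A"
    and sq_cont: "\<And>k. continuous_on A (sq k)"
    and lam_cont: "\<And>k. isCont (lam k) (complex_of_real x)"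
    and Q_cont: "\<And>i k. isCont (\<lambda>w. Q w $ i $ k) (complex_of_real x)"
    and sqsq: "\<And>k z. z \<in> A \<Longrightarrow> (sq k z)\<^sup>2 = (-1) ^ n k * lam k z"
    and lamR: "\<And>k. lam k (complex_of_real x) \<in> \<real>"
    and lampos: "\<And>k. Re (lam k (complex_of_real x)) > 0"
    and Hx: "\<And>i j. H (complex_of_real x) $ i $ j = (\<Sum>k\<in>UNIV. Q (complex_of_real x) $ i $ k * lam k (complex_of_real x) * cnj (Q (complex_of_real x) $ j $ k))"
  shows "\<exists>Vp. ((\<lambda>\<epsilon>::real. Vfun \<alpha> \<beta> Q sq (complex_of_real x + complex_of_real \<sigma> * \<i> * complex_of_real \<epsilon>)) \<longlongrightarrow> Vp) (at_right 0)
           \<and> Wfun \<alpha> \<beta> H (complex_of_real x) = Vp ** adjoint_mat Vp"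
proof -
  define \<gamma> where "\<gamma> \<epsilon> = complex_of_real x + complex_of_real \<sigma> * \<i> * complex_of_real \<epsilon>" for \<epsilon>
  have ofr: "((\<lambda>\<epsilon>::real. complex_of_real \<epsilon>) \<longlongrightarrow> 0) (at_right 0)"
    using tendsto_of_real[OF tendsto_ident_at[of "0::real" "{0<..}"]] by simp
  have "(\<gamma> \<longlongrightarrow> complex_of_real x + complex_of_real \<sigma> * \<i> * 0) (at_right 0)"
    unfolding \<gamma>_def by (intro tendsto_intros ofr)
  then have \<gamma>lim: "(\<gamma> \<longlongrightarrow> complex_of_real x) (at_right 0)" by simp
  have \<gamma>cont: "continuous_on {0<..<r} \<gamma>" unfolding \<gamma>_def by (intro continuous_intros)
  have Im\<gamma>: "Im (\<gamma> \<epsilon>) = \<sigma> * \<epsilon>" for \<epsilon> by (simp add: \<gamma>_def)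
  have \<gamma>A: "\<gamma> \<epsilon> \<in> A" if "0 < \<epsilon>" "\<epsilon> < r" for \<epsilon> using inset[OF that] by (simp add: \<gamma>_def)
  have "\<exists>l. ((\<lambda>\<epsilon>. sq k (\<gamma> \<epsilon>)) \<longlongrightarrow> l) (at_right 0) \<and> l\<^sup>2 = (-1) ^ n k * lam k (complex_of_real x)" for k
  proof (rule branch_limit[OF r])
    show cph: "continuous_on {0<..<r} (\<lambda>\<epsilon>. sq k (\<gamma> \<epsilon>))"
      by (rule continuous_on_compose2[OF sq_cont[of k] \<gamma>cont]) (use \<gamma>A in auto)
    show "(sq k (\<gamma> \<epsilon>))\<^sup>2 = (-1) ^ n k * lam k (\<gamma> \<epsilon>)" if "0 < \<epsilon>" "\<epsilon> < r" for \<epsilon>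
      using sqsq[OF \<gamma>A[OF that]] .
    show "continuous_on {0<..<r} (\<lambda>\<epsilon>. (-1) ^ n k * lam k (\<gamma> \<epsilon>))"
      by (rule continuous_on_eq[OF continuous_on_power[OF cph, of 2]]) (use sqsq \<gamma>A in auto)
    show "((\<lambda>\<epsilon>. (-1) ^ n k * lam k (\<gamma> \<epsilon>)) \<longlongrightarrow> (-1) ^ n k * lam k (complex_of_real x)) (at_right 0)"
      by (intro tendsto_mult tendsto_const isCont_tendsto_compose[OF lam_cont \<gamma>lim])
    show "(-1) ^ n k * lam k (complex_of_real x) \<noteq> 0" using lampos[of k] by auto
  qed
  then obtain gl where gl: "\<And>k. ((\<lambda>\<epsilon>. sq k (\<gamma> \<epsilon>)) \<longlongrightarrow> gl k) (at_right 0)"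
      "\<And>k. (gl k)\<^sup>2 = (-1) ^ n k * lam k (complex_of_real x)"
    by metis
  have gabs: "gl k * cnj (gl k) = lam k (complex_of_real x)" for k
  proof -
    have "(cmod (gl k))\<^sup>2 = cmod ((gl k)\<^sup>2)" by (simp add: norm_power)
    also have "\<dots> = cmod (lam k (complex_of_real x))" by (simp add: gl(2) norm_mult norm_power)
    also have "\<dots> = Re (lam k (complex_of_real x))"
      using lamR[of k] lampos[of k] by (auto elim!: Reals_cases)
    finally have "complex_of_real ((cmod (gl k))\<^sup>2) = complex_of_real (Re (lam k (complex_of_real x)))" by simp
    then have "gl k * cnj (gl k) = complex_of_real (Re (lam k (complex_of_real x)))" by (simp only: complex_norm_square)
    then show ?thesis using lamR[of k] by (simp add: of_real_Re)
  qed
  define a where "a = complex_of_real (\<alpha>/2)"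
  define b where "b = complex_of_real (\<beta>/2)"
  define e where "e = (if \<sigma> = 1 then exp (a * pi * \<i>) else exp (- (a * pi * \<i>)))"
  have ev: "(\<gamma> \<epsilon> - 1) powr a = e * (1 - \<gamma> \<epsilon>) powr a" if "0 < \<epsilon>" for \<epsilon>
    using \<sigma>
  proof
    assume "\<sigma> = 1"
    then show ?thesis using powr_upper[of "\<gamma> \<epsilon>" "\<alpha>/2"] that by (simp add: Im\<gamma> e_def a_def)
  next
    assume "\<sigma> = -1"
    then show ?thesis using powr_lower[of "\<gamma> \<epsilon>" "\<alpha>/2"] that by (simp add: Im\<gamma> e_def a_def)
  qed
  define sp where "sp = e * (1 - complex_of_real x) powr a * (complex_of_real x + 1) powr b"
  have "((\<lambda>\<epsilon>. e * (1 - \<gamma> \<epsilon>) powr a * (\<gamma> \<epsilon> + 1) powr b) \<longlongrightarrow> sp) (at_right 0)"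
    unfolding sp_def using x
    by (intro tendsto_intros \<gamma>lim) (auto simp: complex_nonpos_Reals_iff)
  moreover have "eventually (\<lambda>\<epsilon>. e * (1 - \<gamma> \<epsilon>) powr a * (\<gamma> \<epsilon> + 1) powr b = (\<gamma> \<epsilon> - 1) powr a * (\<gamma> \<epsilon> + 1) powr b) (at_right 0)"
    unfolding eventually_at_right_field by (rule exI[of _ 1]) (auto simp: ev)
  ultimately have splim: "((\<lambda>\<epsilon>. (\<gamma> \<epsilon> - 1) powr a * (\<gamma> \<epsilon> + 1) powr b) \<longlongrightarrow> sp) (at_right 0)"
    by (rule Lim_transform_eventually)
  define Vp :: "complex^'r^'r" where "Vp = (\<chi> i k. sp * (Q (complex_of_real x) $ i $ k * gl k))"
  have "((\<lambda>\<epsilon>. Vfun \<alpha> \<beta> Q sq (\<gamma> \<epsilon>)) \<longlongrightarrow> Vp) (at_right 0)"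
  proof (intro vec_tendstoI)
    fix i k
    show "((\<lambda>\<epsilon>. Vfun \<alpha> \<beta> Q sq (\<gamma> \<epsilon>) $ i $ k) \<longlongrightarrow> Vp $ i $ k) (at_right 0)"
      unfolding Vfun_entry Vp_def vec_lambda_beta a_def[symmetric] b_def[symmetric]
      by (intro tendsto_mult splim gl isCont_tendsto_compose[OF Q_cont \<gamma>lim])
  qed
  moreover have "Wfun \<alpha> \<beta> H (complex_of_real x) = Vp ** adjoint_mat Vp"
  proof -
    have ec: "e * cnj e = 1" using \<sigma>
      by (auto simp: e_def a_def exp_cnj exp_minus[symmetric] exp_add[symmetric])
    have c1: "cnj ((1 - complex_of_real x) powr a) = (1 - complex_of_real x) powr a"
      unfolding a_def by (subst cnj_powr_real) (use x in auto)
    have c2: "cnj ((complex_of_real x + 1) powr b) = (complex_of_real x + 1) powr b"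
      unfolding b_def by (subst cnj_powr_real) (use x in auto)
    have spc: "sp * cnj sp = (1 - complex_of_real x) powr complex_of_real \<alpha> * (1 + complex_of_real x) powr complex_of_real \<beta>"
    proof -
      have "sp * cnj sp = (e * cnj e) * ((1 - complex_of_real x) powr a * (1 - complex_of_real x) powr a)
          * ((complex_of_real x + 1) powr b * (complex_of_real x + 1) powr b)"
        by (simp only: sp_def complex_cnj_mult c1 c2 mult_ac)
      also have "\<dots> = (1 - complex_of_real x) powr complex_of_real \<alpha> * (1 + complex_of_real x) powr complex_of_real \<beta>"
        by (simp only: ec a_def b_def half_sq mult_1_left add.commute[of "complex_of_real x" 1])
      finally show ?thesis .
    qed
    have "Wfun \<alpha> \<beta> H (complex_of_real x) $ i $ j = (Vp ** adjoint_mat Vp) $ i $ j" for i j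
      unfolding Wfun_entry madj_entry Hx sum_distrib_left
    proof (rule sum.cong[OF refl])
      fix k
      have "Vp $ i $ k * cnj (Vp $ j $ k) = (sp * cnj sp) * (Q (complex_of_real x) $ i $ k * (gl k * cnj (gl k)) * cnj (Q (complex_of_real x) $ j $ k))"
        by (simp add: Vp_def mult_ac)
      also have "\<dots> = (1 - complex_of_real x) powr complex_of_real \<alpha> * (1 + complex_of_real x) powr complex_of_real \<beta> *
          (Q (complex_of_real x) $ i $ k * lam k (complex_of_real x) * cnj (Q (complex_of_real x) $ j $ k))"
        by (simp only: spc gabs)
      finally show "(1 - complex_of_real x) powr complex_of_real \<alpha> * (1 + complex_of_real x) powr complex_of_real \<beta> *
          (Q (complex_of_real x) $ i $ k * lam k (complex_of_real x) * cnj (Q (complex_of_real x) $ j $ k)) =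
          Vp $ i $ k * cnj (Vp $ j $ k)" by (rule sym)
    qed
    then show ?thesis by (simp add: vec_eq_iff)
  qed
  ultimately show ?thesis unfolding \<gamma>_def by blast
qed



theorem lemma3p4:
  fixes \<alpha> \<beta> :: real
    and H Q :: "complex \<Rightarrow> complex^'r::finite^'r"
    and lam sq :: "'r \<Rightarrow> complex \<Rightarrow> complex"
    and NH N :: "complex set"
  assumes alpha: "\<alpha> > -1" and beta: "\<beta> > -1"
    (* H analytic on a complex neighbourhood NH of [-1,1] *)
    and NH: "open NH" "complex_of_real ` {-1..1} \<subseteq> NH"
    and H_an: "mat_analytic_on H NH"
    and H_hpd: "\<And>x::real. -1 < x \<Longrightarrow> x < 1 \<Longrightarrow> herm_pos_def (H (complex_of_real x))"
    and H_ends: "H 1 \<noteq> 0" "H (-1) \<noteq> 0"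
    (* eigen-decomposition H = Q \<Lambda> Q* on [-1,1], Q, \<Lambda> analytic on convex neighbourhood N *)
    and N: "open N" "convex N" "complex_of_real ` {-1..1} \<subseteq> N"
    and Q_an: "mat_analytic_on Q N"
    and lam_an: "\<And>j. lam j analytic_on N"
    and Q_unit: "\<And>x::real. -1 \<le> x \<Longrightarrow> x \<le> 1 \<Longrightarrow> unitary_mat (Q (complex_of_real x))"
    and lam_real: "\<And>j (x::real). -1 \<le> x \<Longrightarrow> x \<le> 1 \<Longrightarrow> lam j (complex_of_real x) \<in> \<real>"
    and H_eq: "\<And>x::real. -1 \<le> x \<Longrightarrow> x \<le> 1 \<Longrightarrow>
       H (complex_of_real x) = Q (complex_of_real x) ** diag_mat (\<lambda>j. lam j (complex_of_real x))
                                ** adjoint_mat (Q (complex_of_real x))"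
    and lam_nz: "\<And>j z. z \<in> N \<Longrightarrow> z \<noteq> 1 \<Longrightarrow> z \<noteq> -1 \<Longrightarrow> lam j z \<noteq> 0"
    (* sq j is the analytic continuation to N \ (-\<infinity>,1] of the positive square root of
       (-1)^(n_j) lam_j on (1,1+\<epsilon>) *)
    and sq_an: "\<And>j. sq j analytic_on (N - slit1)"
    and sq_sq: "\<And>j z. z \<in> N - slit1 \<Longrightarrow> (sq j z)\<^sup>2 = (-1) ^ vanish_order1 (lam j) * lam j z"
    and sq_pos: "\<And>j. \<exists>\<epsilon>>0. \<forall>x::real. 1 < x \<and> x < 1 + \<epsilon> \<longrightarrow>
                   sq j (complex_of_real x) \<in> \<real> \<and> Re (sq j (complex_of_real x)) > 0"
  shows "\<exists>\<delta>>0.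
     mat_analytic_on (Vfun \<alpha> \<beta> Q sq) (ball 1 \<delta> - complex_of_real ` {1-\<delta>..1})
   \<and> (\<forall>x::real. 1 - \<delta> < x \<and> x < 1 \<longrightarrow>
        (\<exists>Vp Vm. ((\<lambda>\<epsilon>::real. Vfun \<alpha> \<beta> Q sq (complex_of_real x + \<i> * complex_of_real \<epsilon>)) \<longlongrightarrow> Vp) (at_right 0)
               \<and> ((\<lambda>\<epsilon>::real. Vfun \<alpha> \<beta> Q sq (complex_of_real x - \<i> * complex_of_real \<epsilon>)) \<longlongrightarrow> Vm) (at_right 0)
               \<and> Wfun \<alpha> \<beta> H (complex_of_real x) = Vm ** adjoint_mat Vm
               \<and> Wfun \<alpha> \<beta> H (complex_of_real x) = Vp ** adjoint_mat Vp))
   \<and> (\<forall>z\<in>ball 1 \<delta>. Im z > 0 \<longrightarrow>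
        Wfun \<alpha> \<beta> H z = Vfun \<alpha> \<beta> Q sq z
           ** diag_mat (\<lambda>j. exp (- complex_of_real (\<alpha> + real (vanish_order1 (lam j))) * complex_of_real pi * \<i>))
           ** adjoint_mat (Vfun \<alpha> \<beta> Q sq (cnj z)))
   \<and> (\<forall>z\<in>ball 1 \<delta>. Im z < 0 \<longrightarrow>
        Wfun \<alpha> \<beta> H z = Vfun \<alpha> \<beta> Q sq z
           ** diag_mat (\<lambda>j. exp (complex_of_real (\<alpha> + real (vanish_order1 (lam j))) * complex_of_real pi * \<i>))
           ** adjoint_mat (Vfun \<alpha> \<beta> Q sq (cnj z)))"
proof -
  have H_an': "\<And>i j. (\<lambda>z. H z $ i $ j) analytic_on NH" using H_an unfolding mat_analytic_on_def by blast
  have Q_an': "\<And>i j. (\<lambda>z. Q z $ i $ j) analytic_on N" using Q_an unfolding mat_analytic_on_def by blast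
  have "complex_of_real 1 \<in> complex_of_real ` {-1..1}" by auto
  then have one_N: "(1::complex) \<in> N" "(1::complex) \<in> NH" using N(3) NH(2) by auto
  obtain \<rho>1 where \<rho>1: "\<rho>1 > 0" "ball 1 \<rho>1 \<subseteq> N" using open_contains_ball_eq[OF N(1)] one_N(1) by blast
  obtain \<rho>2 where \<rho>2: "\<rho>2 > 0" "ball 1 \<rho>2 \<subseteq> NH" using open_contains_ball_eq[OF NH(1)] one_N(2) by blast
  define \<rho> where "\<rho> = min (min \<rho>1 \<rho>2) (1/2)"
  have \<rho>: "0 < \<rho>" "\<rho> \<le> 1/2" "ball 1 \<rho> \<subseteq> N" "ball 1 \<rho> \<subseteq> NH"
    using \<rho>1 \<rho>2 by (auto simp: \<rho>_def)
  have cnjB: "cnj z \<in> ball 1 \<rho>" if "z \<in> ball 1 \<rho>" for z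
  proof -
    have "cmod (1 - cnj z) = cmod (cnj (1 - z))" by simp
    then show ?thesis using that by (simp only: mem_ball dist_norm complex_mod_cnj)
  qed
  have distR: "dist 1 (complex_of_real t) = \<bar>1 - t\<bar>" for t
    by (metis dist_of_real dist_real_def of_real_1)
  have Hhol: "(\<lambda>w. H w $ i $ j) holomorphic_on ball 1 \<rho>" for i j
    by (rule analytic_imp_holomorphic[OF analytic_on_subset[OF H_an' \<rho>(4)]])
  have Qhol: "(\<lambda>w. Q w $ i $ j) holomorphic_on ball 1 \<rho>" for i j
    by (rule analytic_imp_holomorphic[OF analytic_on_subset[OF Q_an' \<rho>(3)]])
  have lamhol: "lam k holomorphic_on ball 1 \<rho>" for k
    by (rule analytic_imp_holomorphic[OF analytic_on_subset[OF lam_an \<rho>(3)]])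
  have Qchol: "(\<lambda>w. cnj (Q (cnj w) $ i $ j)) holomorphic_on ball 1 \<rho>" for i j
  proof -
    have "(\<lambda>w. Q w $ i $ j) holomorphic_on cnj ` ball 1 \<rho>"
      by (rule holomorphic_on_subset[OF Qhol]) (use cnjB in auto)
    from holomorphic_on_compose_cnj_cnj[OF this] show ?thesis by (simp add: o_def)
  qed
  have Hext: "H z $ i $ j = (\<Sum>k\<in>UNIV. Q z $ i $ k * lam k z * cnj (Q (cnj z) $ j $ k))"
    if z: "z \<in> ball 1 \<rho>" for z i j
  proof -
    define f where "f w = H w $ i $ j - (\<Sum>k\<in>UNIV. Q w $ i $ k * lam k w * cnj (Q (cnj w) $ j $ k))" for w
    have "f holomorphic_on ball 1 \<rho>" unfolding f_def
      by (intro holomorphic_intros Hhol Qhol lamhol Qchol)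
    have "f z = 0"
    proof (rule analytic_continuation[OF \<open>f holomorphic_on ball 1 \<rho>\<close> open_ball connected_ball _ _ islimpt_real_ivl[of "1 - \<rho>/2" 1] _ z])
      show "complex_of_real ` {1 - \<rho>/2<..<1} \<subseteq> ball 1 \<rho>" using \<rho> by (auto simp: distR)
      show "complex_of_real (1 - \<rho>/2) \<in> ball 1 \<rho>" using \<rho> by (auto simp: distR)
      show "1 - \<rho>/2 < 1" using \<rho> by simp
      fix w assume "w \<in> complex_of_real ` {1 - \<rho>/2<..<1}"
      then obtain t where t: "w = complex_of_real t" "1 - \<rho>/2 < t" "t < 1" by auto
      then have "-1 \<le> t" "t \<le> 1" using \<rho> by auto
      then show "f w = 0" unfolding f_def t(1) using H_eq[of t] by (simp add: triple_entry)
    qed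
    then show ?thesis by (simp add: f_def)
  qed
  have sqrefl: "cnj (sq k (cnj z)) = sq k z" if z: "z \<in> ball 1 \<rho> - slit1" for z k
  proof -
    obtain \<epsilon> where \<epsilon>: "\<epsilon> > 0" "\<And>x::real. 1 < x \<and> x < 1 + \<epsilon> \<Longrightarrow>
                   sq k (complex_of_real x) \<in> \<real> \<and> Re (sq k (complex_of_real x)) > 0"
      using sq_pos[of k] by blast
    define e where "e = min \<epsilon> \<rho>"
    have e: "0 < e" "e \<le> \<epsilon>" "e \<le> \<rho>" using \<epsilon> \<rho> by (auto simp: e_def)
    define S where "S = ball 1 \<rho> - slit1"
    have cnjS: "cnj w \<in> S" if "w \<in> S" for w using that cnjB by (auto simp: S_def slit1_eq)
    have SN: "S \<subseteq> N - slit1" using \<rho> by (auto simp: S_def)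
    have sqhol: "sq k holomorphic_on S"
      by (rule analytic_imp_holomorphic[OF analytic_on_subset[OF sq_an SN]])
    have "sq k holomorphic_on cnj ` S" by (rule holomorphic_on_subset[OF sqhol]) (use cnjS in auto)
    from holomorphic_on_compose_cnj_cnj[OF this] have "(\<lambda>w. cnj (sq k (cnj w))) holomorphic_on S"
      by (simp add: o_def S_def open_ball_slit)
    define f where "f w = cnj (sq k (cnj w)) - sq k w" for w
    have fhol: "f holomorphic_on S" unfolding f_def
      by (intro holomorphic_intros \<open>(\<lambda>w. cnj (sq k (cnj w))) holomorphic_on S\<close> sqhol)
    have "f z = 0"
    proof (rule analytic_continuation[OF fhol _ _ _ _ islimpt_real_ivl[of "1 + e/2" "1 + e"]])
      show "open S" "connected S" using open_ball_slit connected_ball_slit[OF \<rho>(1)] by (auto simp: S_def)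
      show "complex_of_real ` {1 + e/2<..<1 + e} \<subseteq> S" using e by (auto simp: S_def distR slit1_eq)
      show "complex_of_real (1 + e/2) \<in> S" unfolding S_def Diff_iff mem_ball distR using e by (auto simp: slit1_eq)
      show "1 + e/2 < 1 + e" using e by simp
      show "z \<in> S" using z by (simp add: S_def)
      fix w assume "w \<in> complex_of_real ` {1 + e/2<..<1 + e}"
      then obtain t where t: "w = complex_of_real t" "1 + e/2 < t" "t < 1 + e" by auto
      then have "sq k (complex_of_real t) \<in> \<real>" using \<epsilon>(2)[of t] e by auto
      then show "f w = 0" unfolding f_def t(1) by (simp add: Reals_cnj_iff)
    qed
    then show ?thesis by (simp add: f_def)
  qed
  have offslit: "z \<in> ball 1 \<rho> - slit1" "z \<in> N - slit1" if "z \<in> ball 1 \<rho>" "Im z \<noteq> 0" for z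
    using that \<rho> by (auto simp: slit1_eq)
  show ?thesis
  proof (intro exI[of _ \<rho>] conjI \<rho>(1))
    define D where "D = ball 1 \<rho> - complex_of_real ` {1 - \<rho>..1}"
    have Dprops: "z \<in> N - slit1" "z - 1 \<notin> \<real>\<^sub>\<le>\<^sub>0" "z + 1 \<notin> \<real>\<^sub>\<le>\<^sub>0" if "z \<in> D" for z
    proof -
      have zb: "z \<in> ball 1 \<rho>" and zn: "z \<notin> complex_of_real ` {1 - \<rho>..1}" using that by (auto simp: D_def)
      have "\<bar>Re (1 - z)\<bar> \<le> cmod (1 - z)" by (rule abs_Re_le_cmod)
      then have Rez: "\<bar>1 - Re z\<bar> < \<rho>" using zb by (simp add: dist_norm)
      have nsl: "z \<notin> slit1"
      proof
        assume "z \<in> slit1"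
        then have "Im z = 0" "Re z \<le> 1" by (auto simp: slit1_eq)
        then have "z = complex_of_real (Re z)" "Re z \<in> {1 - \<rho>..1}" using Rez by (auto simp: complex_eq_iff)
        then show False using zn by blast
      qed
      show "z \<in> N - slit1" using nsl zb \<rho> by auto
      show "z - 1 \<notin> \<real>\<^sub>\<le>\<^sub>0" using nsl by (auto simp: complex_nonpos_Reals_iff slit1_eq)
      show "z + 1 \<notin> \<real>\<^sub>\<le>\<^sub>0" using Rez \<rho> by (auto simp: complex_nonpos_Reals_iff)
    qed
    show "mat_analytic_on (Vfun \<alpha> \<beta> Q sq) (ball 1 \<rho> - complex_of_real ` {1 - \<rho>..1})"
      unfolding mat_analytic_on_def D_def[symmetric]
    proof (intro allI)
      fix i k
      have DN: "D \<subseteq> N" "D \<subseteq> N - slit1" using Dprops by auto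
      have "(\<lambda>z. (z - 1) powr complex_of_real (\<alpha>/2) * (z + 1) powr complex_of_real (\<beta>/2) * (Q z $ i $ k * sq k z)) analytic_on D"
        by (intro analytic_intros analytic_on_subset[OF Q_an' DN(1)] analytic_on_subset[OF sq_an DN(2)])
           (use Dprops in auto)
      then show "(\<lambda>z. Vfun \<alpha> \<beta> Q sq z $ i $ k) analytic_on D" by (simp only: Vfun_entry)
    qed
  next
    show "\<forall>x::real. 1 - \<rho> < x \<and> x < 1 \<longrightarrow>
        (\<exists>Vp Vm. ((\<lambda>\<epsilon>::real. Vfun \<alpha> \<beta> Q sq (complex_of_real x + \<i> * complex_of_real \<epsilon>)) \<longlongrightarrow> Vp) (at_right 0)
               \<and> ((\<lambda>\<epsilon>::real. Vfun \<alpha> \<beta> Q sq (complex_of_real x - \<i> * complex_of_real \<epsilon>)) \<longlongrightarrow> Vm) (at_right 0)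
               \<and> Wfun \<alpha> \<beta> H (complex_of_real x) = Vm ** adjoint_mat Vm
               \<and> Wfun \<alpha> \<beta> H (complex_of_real x) = Vp ** adjoint_mat Vp)"
    proof (intro allI impI)
      fix x :: real assume x: "1 - \<rho> < x \<and> x < 1"
      have xN: "complex_of_real x \<in> N" using N(3) x \<rho> by auto
      have x1: "-1 < x" "x < 1" using x \<rho> by auto
      have side: "\<exists>Vp. ((\<lambda>\<epsilon>::real. Vfun \<alpha> \<beta> Q sq (complex_of_real x + complex_of_real \<sigma> * \<i> * complex_of_real \<epsilon>)) \<longlongrightarrow> Vp) (at_right 0)
           \<and> Wfun \<alpha> \<beta> H (complex_of_real x) = Vp ** adjoint_mat Vp" if \<sigma>: "\<sigma> = 1 \<or> \<sigma> = -1" for \<sigma>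
      proof (rule jump_side[OF \<sigma> _ x1, where r = "\<rho> - (1 - x)" and A = "N - slit1" and lam = lam and n = "\<lambda>k. vanish_order1 (lam k)"])
        show "0 < \<rho> - (1 - x)" using x by simp
        show "complex_of_real x + complex_of_real \<sigma> * \<i> * complex_of_real \<epsilon> \<in> N - slit1"
          if "0 < \<epsilon>" "\<epsilon> < \<rho> - (1 - x)" for \<epsilon>
        proof -
          let ?z = "complex_of_real x + complex_of_real \<sigma> * \<i> * complex_of_real \<epsilon>"
          have "cmod (1 - ?z) \<le> \<bar>Re (1 - ?z)\<bar> + \<bar>Im (1 - ?z)\<bar>" by (rule cmod_le)
          also have "\<dots> = (1 - x) + \<epsilon>" using \<sigma> that x by auto
          finally have "?z \<in> ball 1 \<rho>" using that by (simp add: dist_norm)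
          moreover have "Im ?z \<noteq> 0" using \<sigma> that by auto
          ultimately show ?thesis using offslit by blast
        qed
        show "continuous_on (N - slit1) (sq k)" for k
          by (rule holomorphic_on_imp_continuous_on[OF analytic_imp_holomorphic[OF sq_an]])
        show "isCont (lam k) (complex_of_real x)" for k
          by (rule analytic_at_imp_isCont[OF analytic_on_subset[OF lam_an]]) (use xN in auto)
        show "isCont (\<lambda>w. Q w $ i $ k) (complex_of_real x)" for i k
          by (rule analytic_at_imp_isCont[OF analytic_on_subset[OF Q_an']]) (use xN in auto)
        show "(sq k z)\<^sup>2 = (-1) ^ vanish_order1 (lam k) * lam k z" if "z \<in> N - slit1" for k z
          using sq_sq[OF that] .
        show "lam k (complex_of_real x) \<in> \<real>" for k using lam_real x1 by auto
        show "Re (lam k (complex_of_real x)) > 0" for k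
        proof (rule lam_pos[OF Q_unit])
          show "herm_pos_def (Q (complex_of_real x) ** diag_mat (\<lambda>j. lam j (complex_of_real x)) ** adjoint_mat (Q (complex_of_real x)))"
            using H_hpd[OF x1] H_eq[of x] x1 by simp
        qed (use x1 in auto)
        show "H (complex_of_real x) $ i $ j = (\<Sum>k\<in>UNIV. Q (complex_of_real x) $ i $ k * lam k (complex_of_real x) * cnj (Q (complex_of_real x) $ j $ k))" for i j
          using H_eq[of x] x1 by (simp add: triple_entry)
      qed
      obtain Vp where Vp: "((\<lambda>\<epsilon>::real. Vfun \<alpha> \<beta> Q sq (complex_of_real x + complex_of_real 1 * \<i> * complex_of_real \<epsilon>)) \<longlongrightarrow> Vp) (at_right 0)"
           "Wfun \<alpha> \<beta> H (complex_of_real x) = Vp ** adjoint_mat Vp" using side[of 1] by auto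
      obtain Vm where Vm: "((\<lambda>\<epsilon>::real. Vfun \<alpha> \<beta> Q sq (complex_of_real x + complex_of_real (-1) * \<i> * complex_of_real \<epsilon>)) \<longlongrightarrow> Vm) (at_right 0)"
           "Wfun \<alpha> \<beta> H (complex_of_real x) = Vm ** adjoint_mat Vm" using side[of "-1"] by auto
      have e1: "(\<lambda>\<epsilon>::real. complex_of_real x + complex_of_real 1 * \<i> * complex_of_real \<epsilon>) = (\<lambda>\<epsilon>. complex_of_real x + \<i> * complex_of_real \<epsilon>)"
        by simp
      have e2: "(\<lambda>\<epsilon>::real. complex_of_real x + complex_of_real (-1) * \<i> * complex_of_real \<epsilon>) = (\<lambda>\<epsilon>. complex_of_real x - \<i> * complex_of_real \<epsilon>)"
        by (simp add: fun_eq_iff)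
      have "((\<lambda>\<epsilon>::real. Vfun \<alpha> \<beta> Q sq (complex_of_real x + \<i> * complex_of_real \<epsilon>)) \<longlongrightarrow> Vp) (at_right 0)"
        using Vp(1) by simp
      moreover have "((\<lambda>\<epsilon>::real. Vfun \<alpha> \<beta> Q sq (complex_of_real x - \<i> * complex_of_real \<epsilon>)) \<longlongrightarrow> Vm) (at_right 0)"
        using Vm(1) e2 by (metis (no_types, lifting) ext)
      ultimately show "\<exists>Vp Vm. ((\<lambda>\<epsilon>::real. Vfun \<alpha> \<beta> Q sq (complex_of_real x + \<i> * complex_of_real \<epsilon>)) \<longlongrightarrow> Vp) (at_right 0)
               \<and> ((\<lambda>\<epsilon>::real. Vfun \<alpha> \<beta> Q sq (complex_of_real x - \<i> * complex_of_real \<epsilon>)) \<longlongrightarrow> Vm) (at_right 0)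
               \<and> Wfun \<alpha> \<beta> H (complex_of_real x) = Vm ** adjoint_mat Vm
               \<and> Wfun \<alpha> \<beta> H (complex_of_real x) = Vp ** adjoint_mat Vp"
        using Vp(2) Vm(2) by blast
    qed
  next
    show "\<forall>z\<in>ball 1 \<rho>. Im z > 0 \<longrightarrow>
        Wfun \<alpha> \<beta> H z = Vfun \<alpha> \<beta> Q sq z
           ** diag_mat (\<lambda>j. exp (- complex_of_real (\<alpha> + real (vanish_order1 (lam j))) * complex_of_real pi * \<i>))
           ** adjoint_mat (Vfun \<alpha> \<beta> Q sq (cnj z))"
    proof (intro ballI impI offaxis_entry)
      fix z assume z: "z \<in> ball 1 \<rho>" "Im z > 0"
      show "H z $ i $ j = (\<Sum>k\<in>UNIV. Q z $ i $ k * lam k z * cnj (Q (cnj z) $ j $ k))" for i j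
        by (rule Hext[OF z(1)])
      show "(z - 1) powr complex_of_real (\<alpha>/2) * (z + 1) powr complex_of_real (\<beta>/2) * sq k z
        * exp (- complex_of_real (\<alpha> + real (vanish_order1 (lam k))) * complex_of_real pi * \<i>)
        * cnj ((cnj z - 1) powr complex_of_real (\<alpha>/2) * (cnj z + 1) powr complex_of_real (\<beta>/2) * sq k (cnj z))
        = (1 - z) powr complex_of_real \<alpha> * (1 + z) powr complex_of_real \<beta> * lam k z" for k
        using key_upper[OF z(2) sqrefl[of z k] sq_sq[of z k], of \<alpha> \<beta>] offslit[OF z(1)] z(2) by auto
    qed
  next
    show "\<forall>z\<in>ball 1 \<rho>. Im z < 0 \<longrightarrow>
        Wfun \<alpha> \<beta> H z = Vfun \<alpha> \<beta> Q sq z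
           ** diag_mat (\<lambda>j. exp (complex_of_real (\<alpha> + real (vanish_order1 (lam j))) * complex_of_real pi * \<i>))
           ** adjoint_mat (Vfun \<alpha> \<beta> Q sq (cnj z))"
    proof (intro ballI impI offaxis_entry)
      fix z assume z: "z \<in> ball 1 \<rho>" "Im z < 0"
      show "H z $ i $ j = (\<Sum>k\<in>UNIV. Q z $ i $ k * lam k z * cnj (Q (cnj z) $ j $ k))" for i j
        by (rule Hext[OF z(1)])
      show "(z - 1) powr complex_of_real (\<alpha>/2) * (z + 1) powr complex_of_real (\<beta>/2) * sq k z
        * exp (complex_of_real (\<alpha> + real (vanish_order1 (lam k))) * complex_of_real pi * \<i>)
        * cnj ((cnj z - 1) powr complex_of_real (\<alpha>/2) * (cnj z + 1) powr complex_of_real (\<beta>/2) * sq k (cnj z))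
        = (1 - z) powr complex_of_real \<alpha> * (1 + z) powr complex_of_real \<beta> * lam k z" for k
        using key_lower[OF z(2) sqrefl[of z k] sq_sq[of z k], of \<alpha> \<beta>] offslit[OF z(1)] z(2) by auto
    qed
  qed
qed

end
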